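(* Let $l\le k$ be non-negative integers. Then $S(k,k,l)=\binom{k}{l}^2$.
   Context: A Dyck path of semilength $k$ (Dyck $k$-path) is a lattice path in $\mathbb{Z}^2$ starting at $(0,0)$, ending at $(2k,0)$, never going below the $x$-axis, each of whose $2k$ steps is either a rise $(1,1)$ or a fall $(1,-1)$. For a Dyck $k$-path $D$ and non-negative integers $l\le m\le 2k$, $S(D,m,l)$ denotes the number of intervals of length $m$ in $D$ (i.e. blocks of $m$ consecutive steps of $D$, one for each starting position $s\in\{1,\dots,2k-m+1\}$) that contain exactly $l$ falls; and $S(k,m,l)=\sum_{D} S(D,m,l)$, the sum over all Dyck $k$-paths $D$. *)

theory Defs
  imports Main
begin

text \<open>A path is a list of steps: True = rise (1,1), False = fall (1,-1).\<close>

definition falls :: "bool list \<Rightarrow> nat" where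
  "falls xs = length (filter Not xs)"

definition rises :: "bool list \<Rightarrow> nat" where
  "rises xs = length (filter id xs)"

definition dyck_paths :: "nat \<Rightarrow> bool list set" where
  "dyck_paths k = {D. length D = 2 * k \<and> rises D = falls D \<and>
      (\<forall>i \<le> length D. falls (take i D) \<le> rises (take i D))}"

text \<open>S(D,m,l): number of starting positions s (1-based s in 1..2k-m+1; here 0-based
  s with s + m \<le> length D) such that the block of m consecutive steps starting
  at s contains exactly l falls.\<close>
definition S_path :: "bool list \<Rightarrow> nat \<Rightarrow> nat \<Rightarrow> nat" where
  "S_path D m l = card {s. s + m \<le> length D \<and> falls (take m (drop s D)) = l}"

definition S_total :: "nat \<Rightarrow> nat \<Rightarrow> nat \<Rightarrow> nat" where
  "S_total k m l = (\<Sum>D\<in>dyck_paths k. S_path D m l)"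

end

theory Submission
  imports Defs
begin

lemma falls_Nil[simp]: "falls [] = 0" by (simp add: falls_def)
lemma rises_Nil[simp]: "rises [] = 0" by (simp add: rises_def)
lemma falls_Cons[simp]: "falls (x#xs) = (if x then falls xs else Suc (falls xs))" by (simp add: falls_def)
lemma rises_Cons[simp]: "rises (x#xs) = (if x then Suc (rises xs) else rises xs)" by (simp add: rises_def)
lemma falls_append[simp]: "falls (xs@ys) = falls xs + falls ys" by (simp add: falls_def)
lemma rises_append[simp]: "rises (xs@ys) = rises xs + rises ys" by (simp add: rises_def)
lemma rises_falls: "rises xs + falls xs = length xs" by (induction xs) auto

lemma falls_take_le: "falls (take i xs) \<le> falls xs"
  by (metis append_take_drop_id falls_append le_add1)
lemma rises_take_le: "rises (take i xs) \<le> rises xs"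
  by (metis append_take_drop_id rises_append le_add1)

lemma falls_rotate[simp]: "falls (rotate r xs) = falls xs"
  by (metis append_take_drop_id falls_append add.commute rotate_drop_take)
lemma rises_rotate[simp]: "rises (rotate r xs) = rises xs"
  by (metis append_take_drop_id rises_append add.commute rotate_drop_take)

definition pos :: "bool list \<Rightarrow> bool" where
  "pos P \<longleftrightarrow> (\<forall>i. 1 \<le> i \<and> i \<le> length P \<longrightarrow> falls (take i P) < rises (take i P))"

lemma pos_dyck: assumes "D \<in> dyck_paths k" shows "pos (True # D)"
  unfolding pos_def
proof (intro allI impI)
  fix i assume i: "1 \<le> i \<and> i \<le> length (True # D)"
  then obtain j where j: "i = Suc j" "j \<le> length D" by (cases i) auto
  have "falls (take j D) \<le> rises (take j D)" using assms j unfolding dyck_paths_def by auto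
  then show "falls (take i (True # D)) < rises (take i (True # D))" using j by simp
qed

lemma dyck_pos: assumes "pos (True # D)" "length D = 2*k" "rises D = falls D"
  shows "D \<in> dyck_paths k"
  unfolding dyck_paths_def
proof (intro CollectI conjI allI impI)
  fix i assume "i \<le> length D"
  then have "falls (take (Suc i) (True#D)) < rises (take (Suc i) (True#D))"
    using assms(1) unfolding pos_def by auto
  then show "falls (take i D) \<le> rises (take i D)" by simp
qed (use assms in auto)

lemma pos_rotate_unique:
  assumes "pos P" "pos (rotate q P)" "q < length P" "rises P = Suc (falls P)"
  shows "q = 0"
proof (rule ccontr)
  assume "q \<noteq> 0"
  have r: "rotate q P = drop q P @ take q P" using assms(3) by (simp add: rotate_drop_take)
  have "falls (take (length P - q) (rotate q P)) < rises (take (length P - q) (rotate q P))"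
    using assms(2,3) \<open>q \<noteq> 0\<close> unfolding pos_def by auto
  then have a: "falls (drop q P) < rises (drop q P)" using r by simp
  have b: "falls (take q P) < rises (take q P)" using assms(1,3) \<open>q \<noteq> 0\<close> unfolding pos_def by auto
  have "falls P = falls (take q P) + falls (drop q P)" "rises P = rises (take q P) + rises (drop q P)"
    by (metis append_take_drop_id falls_append, metis append_take_drop_id rises_append)
  then show False using a b assms(4) by linarith
qed

lemma pos_rotate_exists:
  assumes "X \<noteq> []" "rises X = Suc (falls X)"
  shows "\<exists>q < length X. pos (rotate q X)"
proof -
  define N where "N = length X"
  define H where "H i = int (rises (take i X)) - int (falls (take i X))" for i
  have Hadd: "H (a + b) = H a + (int (rises (take b (drop a X))) - int (falls (take b (drop a X))))" for a b
    unfolding H_def by (simp add: take_add)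
  have HN: "H N = 1" using assms(2) unfolding H_def N_def by simp
  have H0: "H 0 = 0" unfolding H_def by simp
  have N0: "0 < N" using assms(1) N_def by simp
  define M where "M = Min (H ` {..<N})"
  have Mle: "M \<le> H i" if "i < N" for i unfolding M_def using that by simp
  have "M \<in> H ` {..<N}" unfolding M_def using N0 by (intro Min_in) auto
  then obtain i0 where i0: "i0 < N" "H i0 = M" by auto
  define q where "q = Max {i. i < N \<and> H i = M}"
  have fin: "finite {i. i < N \<and> H i = M}" by simp
  have "q \<in> {i. i < N \<and> H i = M}" unfolding q_def using i0 fin by (intro Max_in) auto
  then have q: "q < N" "H q = M" by auto
  have qmax: "i \<le> q" if "i < N" "H i = M" for i unfolding q_def using that fin by (intro Max_ge) auto
  have M0: "M \<le> 0" using Mle[OF N0] H0 by simp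
  have r: "rotate q X = drop q X @ take q X" using q(1) N_def by (simp add: rotate_drop_take)
  have "pos (rotate q X)" unfolding pos_def
  proof (intro allI impI)
    fix j assume j: "1 \<le> j \<and> j \<le> length (rotate q X)"
    then have jN: "j \<le> N" by (simp add: N_def)
    show "falls (take j (rotate q X)) < rises (take j (rotate q X))"
    proof (cases "j \<le> N - q")
      case True
      then have t: "take j (rotate q X) = take j (drop q X)" using r N_def by simp
      have "H (q + j) > M"
      proof (cases "q + j < N")
        case True
        then have "H (q+j) \<ge> M" using Mle by simp
        moreover have "H (q+j) \<noteq> M" using qmax[OF True] j by auto
        ultimately show ?thesis by simp
      next
        case False
        then have "q + j = N" using \<open>j \<le> N - q\<close> q by simp
        then show ?thesis using HN M0 by simp
      qed
      then show ?thesis using Hadd[of q j] q t by simp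
    next
      case False
      define j' where "j' = j - (N - q)"
      have t: "take j (rotate q X) = drop q X @ take j' X" using r N_def False j'_def jN by (simp add: min_def)
      have "j' < N" using jN q False j'_def by simp
      then have "H j' \<ge> M" using Mle by simp
      moreover have "H N = H q + (int (rises (drop q X)) - int (falls (drop q X)))"
        using Hadd[of q "N - q"] q(1) N_def by simp
      ultimately show ?thesis using t HN q unfolding H_def by simp
    qed
  qed
  then show ?thesis using q N_def by auto
qed


definition LL :: "nat \<Rightarrow> bool list set" where
  "LL k = {X. length X = Suc (2*k) \<and> falls X = k}"

lemma dyck_len: "D \<in> dyck_paths k \<Longrightarrow> length D = 2*k" by (simp add: dyck_paths_def)
lemma dyck_rf: "D \<in> dyck_paths k \<Longrightarrow> rises D = falls D" by (simp add: dyck_paths_def)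
lemma dyck_falls: "D \<in> dyck_paths k \<Longrightarrow> falls D = k"
  using rises_falls[of D] by (simp add: dyck_paths_def)

lemma rotate_back: "rotate (length xs - r) (rotate r xs) = xs" if "r \<le> length xs" for xs :: "'a list"
  using that by (simp add: rotate_rotate)

lemma cyc_bij: "bij_betw (\<lambda>(D,r). rotate r (True#D)) (dyck_paths k \<times> {..<Suc(2*k)}) (LL k)"
proof -
  let ?n = "Suc (2*k)"
  have inj: "inj_on (\<lambda>(D,r). rotate r (True#D)) (dyck_paths k \<times> {..<?n})"
  proof (rule inj_onI, clarify)
    fix D r D' r'
    assume D: "D \<in> dyck_paths k" "r < ?n" and D': "D' \<in> dyck_paths k" "r' < ?n"
      and eq: "rotate r (True # D) = rotate r' (True # D')"
    have lP: "length (True#D) = ?n" "length (True#D') = ?n" using D D' dyck_len by auto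
    have "True # D' = rotate (?n - r') (rotate r' (True # D'))"
      using rotate_back[of r' "True#D'"] lP D' by simp
    also have "\<dots> = rotate (?n - r') (rotate r (True # D))" using eq by simp
    also have "\<dots> = rotate (?n - r' + r) (True # D)" by (simp add: rotate_rotate)
    also have "\<dots> = rotate ((?n - r' + r) mod ?n) (True # D)" using lP
      by (metis rotate_conv_mod)
    finally have e: "True # D' = rotate ((?n - r' + r) mod ?n) (True # D)" .
    have "(?n - r' + r) mod ?n = 0"
    proof (rule pos_rotate_unique)
      show "pos (True # D)" using pos_dyck[OF D(1)] .
      show "pos (rotate ((?n - r' + r) mod ?n) (True # D))" using e pos_dyck[OF D'(1)] by simp
      show "(?n - r' + r) mod ?n < length (True # D)" using lP by simp
      show "rises (True # D) = Suc (falls (True # D))" using dyck_rf[OF D(1)] by simp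
    qed
    then have "True # D' = True # D" using e by simp
    moreover have "r = r'"
    proof (rule ccontr)
      assume "r \<noteq> r'"
      show False
      proof (cases "r < r'")
        case True
        then have "(?n - r' + r) mod ?n = ?n - r' + r" using D' by (intro mod_less) auto
        then show False using \<open>(?n - r' + r) mod ?n = 0\<close> D' by simp
      next
        case False
        then have "?n - r' + r = (r - r') + ?n" using D' by simp
        then have "(?n - r' + r) mod ?n = (r - r') mod ?n" by (metis mod_add_self2)
        also have "\<dots> = r - r'" using D by (intro mod_less) auto
        finally have "(?n - r' + r) mod ?n = r - r'" .
        then show False using \<open>(?n - r' + r) mod ?n = 0\<close> False \<open>r \<noteq> r'\<close> by simp
      qed
    qed
    ultimately show "D = D' \<and> r = r'" by simp
  qed
  have sub: "(\<lambda>(D,r). rotate r (True#D)) ` (dyck_paths k \<times> {..<?n}) \<subseteq> LL k"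
    by (auto simp: LL_def dyck_len dyck_falls)
  have sup: "LL k \<subseteq> (\<lambda>(D,r). rotate r (True#D)) ` (dyck_paths k \<times> {..<?n})"
  proof
    fix X assume X: "X \<in> LL k"
    then have lX: "length X = ?n" and fX: "falls X = k" by (auto simp: LL_def)
    have rX: "rises X = Suc (falls X)" using rises_falls[of X] lX fX by simp
    obtain q where q: "q < length X" "pos (rotate q X)"
      using pos_rotate_exists[OF _ rX] lX by fastforce
    define P where "P = rotate q X"
    have lP: "length P = ?n" using lX P_def by simp
    then obtain b D where PD: "P = b # D" by (cases P) auto
    have "falls (take 1 P) < rises (take 1 P)" using q(2) lP unfolding pos_def P_def[symmetric] by simp
    then have b: "b" using PD by (cases b) auto
    have lD: "length D = 2*k" using lP PD by simp
    have "falls P = k" using fX P_def by simp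
    then have fD: "falls D = k" using PD b by simp
    have rD: "rises D = falls D" using rises_falls[of D] lD fD by simp
    have Dd: "D \<in> dyck_paths k" using dyck_pos[OF _ lD rD] q(2) PD b P_def by simp
    have "X = rotate (?n - q) P" using rotate_back[of q X] q lX P_def by simp
    then have "X = rotate (?n - q) (True # D)" using PD b by simp
    moreover have "X = rotate ((?n - q) mod ?n) (True # D)"
      using calculation lD by (metis length_Cons rotate_conv_mod)
    ultimately show "X \<in> (\<lambda>(D,r). rotate r (True#D)) ` (dyck_paths k \<times> {..<?n})"
      using Dd by (intro image_eqI[of _ _ "(D, (?n - q) mod ?n)"]) auto
  qed
  have "(\<lambda>(D,r). rotate r (True#D)) ` (dyck_paths k \<times> {..<?n}) = LL k"
    using sub sup by (rule subset_antisym)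
  then show ?thesis using inj unfolding bij_betw_def by simp
qed


lemma finite_len: "finite {xs :: bool list. length xs = a \<and> P xs}"
proof -
  have "{xs :: bool list. length xs = a \<and> P xs} \<subseteq> {xs. set xs \<subseteq> UNIV \<and> length xs = a}" by auto
  then show ?thesis by (rule finite_subset) (rule finite_lists_length_eq, simp)
qed

lemma finite_dyck: "finite (dyck_paths k)"
proof -
  have "dyck_paths k \<subseteq> {xs. length xs = 2*k \<and> True}" by (auto simp: dyck_paths_def)
  then show ?thesis by (rule finite_subset) (rule finite_len)
qed

lemma card_falls: "card {xs. length xs = a \<and> falls xs = b} = a choose b"
proof (induction a arbitrary: b)
  case 0
  have "{xs. length xs = 0 \<and> falls xs = b} = (if b = 0 then {[]} else {})" by auto
  then show ?case by simp
next
  case (Suc a)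
  show ?case
  proof (cases b)
    case 0
    have "{xs. length xs = Suc a \<and> falls xs = b} = Cons True ` {xs. length xs = a \<and> falls xs = 0}"
      using 0 by (auto simp: length_Suc_conv split: if_splits)
    then show ?thesis using Suc.IH[of 0] 0 by (simp add: card_image)
  next
    case (Suc b')
    have "{xs. length xs = Suc a \<and> falls xs = b} = Cons True ` {xs. length xs = a \<and> falls xs = b}
       \<union> Cons False ` {xs. length xs = a \<and> falls xs = b'}"
      using Suc by (auto simp: length_Suc_conv split: if_splits)
    moreover have "card (Cons True ` {xs. length xs = a \<and> falls xs = b}
       \<union> Cons False ` {xs. length xs = a \<and> falls xs = b'}) =
       card (Cons True ` {xs. length xs = a \<and> falls xs = b}) + card (Cons False ` {xs. length xs = a \<and> falls xs = b'})"
      by (intro card_Un_disjoint) (auto intro: finite_len)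
    ultimately show ?thesis using Suc.IH[of b] Suc.IH[of b'] Suc by (simp add: card_image)
  qed
qed

lemma card_LL_take:
  assumes "l \<le> k"
  shows "card {X \<in> LL k. falls (take k X) = l} = (k choose l) * (Suc k choose (k - l))"
proof -
  let ?A = "{xs. length xs = k \<and> falls xs = l}"
  let ?B = "{xs. length xs = Suc k \<and> falls xs = k - l}"
  let ?g = "\<lambda>p. fst p @ snd p"
  have "{X \<in> LL k. falls (take k X) = l} = ?g ` (?A \<times> ?B)"
  proof (intro equalityI subsetI)
    fix X assume X: "X \<in> {X \<in> LL k. falls (take k X) = l}"
    then have lX: "length X = Suc (2*k)" "falls X = k" "falls (take k X) = l" by (auto simp: LL_def)
    have "falls X = falls (take k X) + falls (drop k X)" by (metis append_take_drop_id falls_append)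
    then have "falls (drop k X) = k - l" using lX by simp
    then have "(take k X, drop k X) \<in> ?A \<times> ?B" using lX by simp
    moreover have "X = ?g (take k X, drop k X)" by simp
    ultimately show "X \<in> ?g ` (?A \<times> ?B)" by blast
  next
    fix X assume "X \<in> ?g ` (?A \<times> ?B)"
    then obtain u v where uv: "u \<in> ?A" "v \<in> ?B" "X = u @ v" by auto
    then have "length X = Suc (2*k)" "falls X = k" "take k X = u" using assms by auto
    then show "X \<in> {X \<in> LL k. falls (take k X) = l}" using uv by (simp add: LL_def)
  qed
  moreover have "inj_on ?g (?A \<times> ?B)"
  proof (rule inj_onI)
    fix p q assume pq: "p \<in> ?A \<times> ?B" "q \<in> ?A \<times> ?B" "?g p = ?g q"
    have l: "length (fst p) = length (fst q)" using pq(1,2) by (simp add: mem_Times_iff)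
    have e: "fst p @ snd p = fst q @ snd q" using pq(3) by simp
    have "fst p = fst q \<and> snd p = snd q" using append_eq_append_conv[OF disjI1[OF l]] e by blast
    then have "fst p = fst q" "snd p = snd q" by simp_all
    then show "p = q" by (simp add: prod_eq_iff)
  qed
  ultimately have "card {X \<in> LL k. falls (take k X) = l} = card (?A \<times> ?B)"
    by (simp add: card_image)
  then show ?thesis by (simp add: card_cartesian_product card_falls)
qed

lemma card_via_cyc:
  "card {X \<in> LL k. c X} = (\<Sum>D\<in>dyck_paths k. card {r. r < Suc (2*k) \<and> c (rotate r (True # D))})"
proof -
  let ?f = "\<lambda>(D,r). rotate r (True#D)"
  let ?S = "SIGMA D:dyck_paths k. {r. r < Suc (2*k) \<and> c (rotate r (True # D))}"
  have "bij_betw ?f ?S {X \<in> LL k. c X}"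
  proof -
    have b: "bij_betw ?f (dyck_paths k \<times> {..<Suc(2*k)}) (LL k)" by (rule cyc_bij)
    have "?S = (dyck_paths k \<times> {..<Suc(2*k)}) \<inter> {p. c (?f p)}" by auto
    moreover have "{X \<in> LL k. c X} = ?f ` ((dyck_paths k \<times> {..<Suc(2*k)}) \<inter> {p. c (?f p)})"
    proof (intro equalityI subsetI)
      fix x assume x: "x \<in> {X \<in> LL k. c X}"
      then obtain p where "p \<in> dyck_paths k \<times> {..<Suc(2*k)}" "x = ?f p"
        using b unfolding bij_betw_def by (metis (no_types, lifting) imageE mem_Collect_eq)
      then show "x \<in> ?f ` ((dyck_paths k \<times> {..<Suc(2*k)}) \<inter> {p. c (?f p)})" using x by blast
    next
      fix x assume "x \<in> ?f ` ((dyck_paths k \<times> {..<Suc(2*k)}) \<inter> {p. c (?f p)})"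
      then show "x \<in> {X \<in> LL k. c X}" using b unfolding bij_betw_def by blast
    qed
    moreover have "inj_on ?f ((dyck_paths k \<times> {..<Suc(2*k)}) \<inter> {p. c (?f p)})"
      using b unfolding bij_betw_def by (meson inf_le1 inj_on_subset)
    ultimately show ?thesis unfolding bij_betw_def by simp
  qed
  then have "card {X \<in> LL k. c X} = card ?S" by (simp add: bij_betw_same_card)
  also have "\<dots> = (\<Sum>D\<in>dyck_paths k. card {r. r < Suc (2*k) \<and> c (rotate r (True # D))})"
    by (rule card_SigmaI) (auto simp: finite_dyck)
  finally show ?thesis .
qed


lemma window_falls: "falls (take i D) + falls (take m (drop i D)) = falls (take (i + m) D)"
  by (simp add: take_add)

lemma drop_falls: "falls (take i D) + falls (drop i D) = falls D"
  by (metis append_take_drop_id falls_append)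

lemma rot_low:
  assumes "s \<le> k" "1 \<le> k" "length D = 2*k"
  shows "take k (rotate (Suc s) (True#D)) = take k (drop s D)"
proof -
  have "Suc s mod length (True#D) = Suc s" using assms by simp
  then have "rotate (Suc s) (True#D) = drop s D @ True # take s D"
    by (simp add: rotate_drop_take)
  then show ?thesis using assms by simp
qed

lemma rot_high:
  assumes "s + 2 \<le> k" "length D = 2*k"
  shows "falls (take k (rotate (s+k+2) (True#D))) = falls (drop (s+k+1) D) + falls (take s D)"
proof -
  have "(s+k+2) mod length (True#D) = Suc (s+k+1)" using assms by simp
  then have "rotate (s+k+2) (True#D) = drop (s+k+1) D @ True # take (s+k+1) D"
    by (simp add: rotate_drop_take)
  moreover have "length (drop (s+k+1) D) = k - 1 - s" using assms by simp
  moreover have "k - (k - 1 - s) = Suc s" using assms by simp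
  ultimately have "take k (rotate (s+k+2) (True#D)) = drop (s+k+1) D @ True # take s D"
    using assms by (simp add: min_def)
  then show ?thesis by simp
qed


lemma key_high:
  assumes D: "D \<in> dyck_paths k" and k: "1 \<le> k" and s: "s + Suc k \<le> 2*k"
  shows "falls (take k (rotate (if s = k - 1 then 0 else s+k+2) (True#D)))
         + falls (take (Suc k) (drop s D)) = k"
proof -
  have lD: "length D = 2*k" and fD: "falls D = k" using D dyck_len dyck_falls by auto
  have w: "falls (take s D) + falls (take (Suc k) (drop s D)) = falls (take (s + Suc k) D)"
    by (rule window_falls)
  show ?thesis
  proof (cases "s = k - 1")
    case True
    have "take k (True#D) = True # take (k-1) D" using k by (cases k) auto
    moreover have "take (s + Suc k) D = D" using True lD k by simp
    ultimately show ?thesis using True w fD by simp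
  next
    case False
    then have s2: "s + 2 \<le> k" using s by simp
    have "falls (take (s+k+1) D) + falls (drop (s+k+1) D) = k" using drop_falls fD by simp
    then show ?thesis using False rot_high[OF s2 lD] w by simp
  qed
qed

lemma per_D:
  assumes D: "D \<in> dyck_paths k" and k: "1 \<le> k" and l: "l \<le> k"
  shows "card {r. r < Suc (2*k) \<and> falls (take k (rotate r (True#D))) = l}
         = S_path D k l + S_path D (Suc k) (k - l)"
proof -
  have lD: "length D = 2*k" using D dyck_len by auto
  define c where "c r \<longleftrightarrow> falls (take k (rotate r (True#D))) = l" for r
  define A1 where "A1 = {r. 1 \<le> r \<and> r \<le> Suc k \<and> c r}"
  define A2 where "A2 = {r. (r = 0 \<or> (k+2 \<le> r \<and> r \<le> 2*k)) \<and> c r}"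
  define S1 where "S1 = {s. s + k \<le> length D \<and> falls (take k (drop s D)) = l}"
  define S2 where "S2 = {s. s + Suc k \<le> length D \<and> falls (take (Suc k) (drop s D)) = k - l}"
  define g where "g s = (if s = k - 1 then 0 else s+k+2)" for s
  have split: "{r. r < Suc (2*k) \<and> falls (take k (rotate r (True#D))) = l} = A1 \<union> A2"
    using k unfolding A1_def A2_def c_def by auto
  have disj: "A1 \<inter> A2 = {}" unfolding A1_def A2_def by auto
  have finA: "finite A1" "finite A2" unfolding A1_def A2_def by (auto intro: finite_subset[of _ "{..2*k}"])
  have A1: "A1 = Suc ` S1"
  proof (intro equalityI subsetI)
    fix r assume r: "r \<in> A1"
    then obtain s where rs: "r = Suc s" unfolding A1_def by (cases r) auto
    then have sk: "s \<le> k" using r unfolding A1_def by auto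
    have "c r" using r unfolding A1_def by auto
    then have "s \<in> S1" using rot_low[OF sk k lD] rs sk lD unfolding c_def S1_def by auto
    then show "r \<in> Suc ` S1" using rs by blast
  next
    fix r assume "r \<in> Suc ` S1"
    then obtain s where rs: "r = Suc s" "s \<in> S1" by auto
    then have sk: "s \<le> k" unfolding S1_def using lD by auto
    show "r \<in> A1" using rs rot_low[OF sk k lD] sk unfolding A1_def c_def S1_def by auto
  qed
  have cg: "c (g s) \<longleftrightarrow> falls (take (Suc k) (drop s D)) = k - l" if "s + Suc k \<le> 2*k" for s
    using key_high[OF D k that] l unfolding c_def g_def by auto
  have A2: "A2 = g ` S2"
  proof (intro equalityI subsetI)
    fix r assume r: "r \<in> A2"
    show "r \<in> g ` S2"
    proof (cases "r = 0")
      case True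
      have "g (k-1) = 0" unfolding g_def by simp
      moreover have "k - 1 + Suc k \<le> 2*k" using k by simp
      moreover have "c (g (k-1))" using r True \<open>g (k-1) = 0\<close> unfolding A2_def by simp
      ultimately have "falls (take (Suc k) (drop (k-1) D)) = k - l" using cg by blast
      then have "k - 1 \<in> S2" using lD k unfolding S2_def by simp
      then show ?thesis using True \<open>g (k-1) = 0\<close> by (intro image_eqI[of r g "k-1"]) simp_all
    next
      case False
      then have rr: "k + 2 \<le> r" "r \<le> 2*k" "c r" using r unfolding A2_def by auto
      define s where "s = r - (k+2)"
      have gs: "g s = r" unfolding g_def s_def using rr by auto
      have ss: "s + Suc k \<le> 2*k" using rr s_def by simp
      have "s \<in> S2" using cg[OF ss] gs rr ss lD unfolding S2_def by auto
      then show ?thesis using gs by (intro image_eqI[of r g s]) simp_all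
    qed
  next
    fix r assume "r \<in> g ` S2"
    then obtain s where rs: "r = g s" "s \<in> S2" by auto
    then have ss: "s + Suc k \<le> 2*k" using lD unfolding S2_def by auto
    have "c r" using cg[OF ss] rs unfolding S2_def by auto
    moreover have "r = 0 \<or> (k+2 \<le> r \<and> r \<le> 2*k)" using rs ss unfolding g_def by auto
    ultimately show "r \<in> A2" unfolding A2_def by auto
  qed
  have injg: "inj_on g S2"
  proof (rule inj_onI)
    fix x y assume xy: "x \<in> S2" "y \<in> S2" "g x = g y"
    then have "x + Suc k \<le> 2*k" "y + Suc k \<le> 2*k" using lD unfolding S2_def by auto
    then show "x = y" using xy(3) unfolding g_def by (auto split: if_splits)
  qed
  have "card (A1 \<union> A2) = card A1 + card A2" using disj finA by (simp add: card_Un_disjoint)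
  also have "card A1 = card S1" unfolding A1 by (simp add: card_image)
  also have "card A2 = card S2" unfolding A2 using injg by (simp add: card_image)
  finally show ?thesis using split unfolding S_path_def S1_def S2_def by simp
qed


definition rc :: "bool list \<Rightarrow> bool list" where "rc D = map Not (rev D)"

lemma falls_rc[simp]: "falls (rc xs) = rises xs"
  unfolding rc_def by (induction xs) auto
lemma rises_rc[simp]: "rises (rc xs) = falls xs"
  unfolding rc_def by (induction xs) auto
lemma rc_rc[simp]: "rc (rc xs) = xs" unfolding rc_def by (simp add: rev_map comp_def)
lemma length_rc[simp]: "length (rc xs) = length xs" unfolding rc_def by simp

lemma take_rc: "take i (rc D) = rc (drop (length D - i) D)"
  unfolding rc_def by (simp add: take_map take_rev)

lemma window_rc:
  assumes "s + m \<le> length D"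
  shows "take m (drop s (rc D)) = rc (take m (drop (length D - s - m) D))"
  using assms unfolding rc_def by (simp add: take_map drop_map take_rev drop_rev drop_take)

lemma rc_dyck: assumes D: "D \<in> dyck_paths k" shows "rc D \<in> dyck_paths k"
  unfolding dyck_paths_def
proof (intro CollectI conjI allI impI)
  show "length (rc D) = 2*k" using D dyck_len by simp
  show "rises (rc D) = falls (rc D)" using D dyck_rf by simp
  fix i assume i: "i \<le> length (rc D)"
  define j where "j = length D - i"
  have "falls (take j D) \<le> rises (take j D)" using D unfolding dyck_paths_def j_def by auto
  moreover have "rises D = rises (take j D) + rises (drop j D)" by (metis append_take_drop_id rises_append)
  moreover have "falls D = falls (take j D) + falls (drop j D)" by (metis append_take_drop_id falls_append)
  moreover have "rises D = falls D" using D dyck_rf by simp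
  ultimately have "rises (drop j D) \<le> falls (drop j D)" by linarith
  then show "falls (take i (rc D)) \<le> rises (take i (rc D))" unfolding take_rc j_def by simp
qed

lemma rc_bij: "bij_betw rc (dyck_paths k) (dyck_paths k)"
proof -
  have "inj_on rc (dyck_paths k)" by (metis inj_onI rc_rc)
  moreover have "rc ` dyck_paths k = dyck_paths k"
  proof (intro equalityI subsetI)
    fix x assume "x \<in> rc ` dyck_paths k" then show "x \<in> dyck_paths k" using rc_dyck by auto
  next
    fix x assume "x \<in> dyck_paths k"
    then have "rc x \<in> dyck_paths k" by (rule rc_dyck)
    then show "x \<in> rc ` dyck_paths k" by (metis image_eqI rc_rc)
  qed
  ultimately show ?thesis unfolding bij_betw_def by simp
qed

lemma S_path_rc:
  assumes "l \<le> m"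
  shows "S_path (rc D) m l = S_path D m (m - l)"
proof -
  let ?n = "length D"
  define h where "h s = ?n - s - m" for s
  let ?P = "{s. s + m \<le> ?n \<and> falls (take m (drop s D)) = m - l}"
  have "{s. s + m \<le> length (rc D) \<and> falls (take m (drop s (rc D))) = l} = h ` ?P"
  proof (intro equalityI subsetI)
    fix s assume s: "s \<in> {s. s + m \<le> length (rc D) \<and> falls (take m (drop s (rc D))) = l}"
    have sm: "s + m \<le> ?n" using s by simp
    have fl: "falls (take m (drop s (rc D))) = l" using s by simp
    define w where "w = take m (drop (?n - s - m) D)"
    have eq: "take m (drop s (rc D)) = rc w" unfolding w_def by (rule window_rc[OF sm])
    have lw: "length w = m" using sm unfolding w_def by simp
    have "falls (rc w) = l" using fl eq by simp
    then have "rises w = l" by simp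
    then have "falls w = m - l" using rises_falls[of w] lw by simp
    then have mem: "?n - s - m \<in> ?P" using sm unfolding w_def by simp
    have hx: "s = h (?n - s - m)" unfolding h_def using sm by simp
    show "s \<in> h ` ?P" by (rule image_eqI[of s h "?n - s - m", OF hx mem])
  next
    fix x assume "x \<in> h ` ?P"
    then obtain t where t: "t \<in> ?P" "x = h t" by blast
    have tm: "t + m \<le> ?n" using t(1) by simp
    have ft: "falls (take m (drop t D)) = m - l" using t(1) by simp
    have xm: "x + m \<le> ?n" using t(2) tm unfolding h_def by simp
    have tx: "?n - x - m = t" using t(2) tm unfolding h_def by simp
    define w where "w = take m (drop t D)"
    have lw: "length w = m" using tm unfolding w_def by simp
    have "rises w = l" using rises_falls[of w] lw assms ft unfolding w_def by simp
    moreover have "take m (drop x (rc D)) = rc w" using window_rc[OF xm] tx unfolding w_def by simp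
    ultimately have "falls (take m (drop x (rc D))) = l" by simp
    then show "x \<in> {s. s + m \<le> length (rc D) \<and> falls (take m (drop s (rc D))) = l}"
      using xm by simp
  qed
  moreover have "inj_on h ?P"
  proof (rule inj_onI)
    fix a b assume ab: "a \<in> ?P" "b \<in> ?P" "h a = h b"
    then have "a + m \<le> ?n" "b + m \<le> ?n" by simp_all
    then show "a = b" using ab(3) unfolding h_def by simp
  qed
  ultimately have "card {s. s + m \<le> length (rc D) \<and> falls (take m (drop s (rc D))) = l} = card ?P"
    by (simp add: card_image)
  then show ?thesis unfolding S_path_def by simp
qed

lemma S_total_sym:
  assumes "l \<le> m"
  shows "S_total k m l = S_total k m (m - l)"
proof -
  have "S_total k m l = (\<Sum>D\<in>dyck_paths k. S_path (rc D) m l)"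
    unfolding S_total_def by (rule sum.reindex_bij_betw[OF rc_bij, symmetric])
  also have "\<dots> = S_total k m (m - l)" unfolding S_total_def using S_path_rc[OF assms] by simp
  finally show ?thesis .
qed

lemma y_top: "S_total k (Suc k) (Suc k) = 0"
proof -
  have "S_path D (Suc k) (Suc k) = 0" if D: "D \<in> dyck_paths k" for D
  proof -
    have "{s. s + Suc k \<le> length D \<and> falls (take (Suc k) (drop s D)) = Suc k} = {}"
    proof (rule ccontr)
      assume "\<not> ?thesis"
      then obtain s where "falls (take (Suc k) (drop s D)) = Suc k" by auto
      moreover have "falls (take s D) + falls (take (Suc k) (drop s D)) = falls (take (s + Suc k) D)"
        by (rule window_falls)
      moreover have "falls (take (s + Suc k) D) \<le> k" using falls_take_le[of "s + Suc k" D] dyck_falls[OF D] by simp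
      ultimately show False by simp
    qed
    then show ?thesis unfolding S_path_def by (simp only: card.empty)
  qed
  then show ?thesis unfolding S_total_def by simp
qed

lemma E_eq:
  assumes k: "1 \<le> k" and l: "l \<le> k"
  shows "S_total k k l + S_total k (Suc k) (k - l) = (k choose l) * (Suc k choose (k - l))"
proof -
  have "(k choose l) * (Suc k choose (k - l)) = card {X \<in> LL k. falls (take k X) = l}"
    using card_LL_take[OF l] by simp
  also have "\<dots> = (\<Sum>D\<in>dyck_paths k. card {r. r < Suc (2*k) \<and> falls (take k (rotate r (True # D))) = l})"
    by (rule card_via_cyc)
  also have "\<dots> = (\<Sum>D\<in>dyck_paths k. S_path D k l + S_path D (Suc k) (k - l))"
    using per_D[OF _ k l] by (intro sum.cong) auto
  also have "\<dots> = S_total k k l + S_total k (Suc k) (k - l)"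
    unfolding S_total_def by (simp add: sum.distrib)
  finally show ?thesis by simp
qed

theorem corollary2:
  fixes k l :: nat
  assumes "l \<le> k"
  shows "S_total k k l = (k choose l)^2"
proof (cases "k = 0")
  case True
  have "dyck_paths 0 = {[]}" unfolding dyck_paths_def by auto
  then have "S_total 0 0 0 = 1" unfolding S_total_def S_path_def by simp
  then show ?thesis using True assms by simp
next
  case False
  then have k: "1 \<le> k" by simp
  define x where "x i = int (S_total k k i)" for i
  define y where "y j = int (S_total k (Suc k) j)" for j
  have E: "x i + y (k - i) = int (k choose i) * int (Suc k choose (k - i))" if "i \<le> k" for i
    using E_eq[OF k that] unfolding x_def y_def by (metis of_nat_add of_nat_mult)
  have sx: "x i = x (k - i)" if "i \<le> k" for i using S_total_sym[OF that] unfolding x_def by simp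
  have sy: "y j = y (Suc k - j)" if "j \<le> Suc k" for j using S_total_sym[OF that] unfolding y_def by simp
  have y0: "y 0 = 0" using sy[of 0] y_top unfolding y_def by simp
  have main: "i \<le> k \<Longrightarrow> x i = int (k choose i)^2" for i
  proof (induction i)
    case 0
    have "x k + y 0 = 1" using E[of k] by simp
    then show ?case using sx[of 0] y0 by simp
  next
    case (Suc i)
    then have ik: "i < k" by simp
    have e1: "x i + y (Suc i) = int (k choose i) * int (Suc k choose Suc i)"
    proof -
      have "y (k - i) = y (Suc i)" using sy[of "k - i"] ik by (simp add: Suc_diff_le)
      moreover have "Suc k choose (k - i) = Suc k choose Suc i"
        using binomial_symmetric[of "Suc i" "Suc k"] ik by (simp add: Suc_diff_le)
      ultimately show ?thesis using E[of i] ik by simp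
    qed
    have e2: "x (Suc i) + y (Suc i) = int (k choose Suc i) * int (Suc k choose Suc i)"
    proof -
      have "x (k - (k - Suc i)) = x (Suc i)" using ik by simp
      have "y (k - (k - Suc i)) = y (Suc i)" using ik by simp
      moreover have "k choose (k - Suc i) = k choose Suc i"
        using binomial_symmetric[of "Suc i" k] ik by simp
      moreover have "x (k - Suc i) = x (Suc i)" using sx[of "Suc i"] ik by simp
      ultimately show ?thesis using E[of "k - Suc i"] ik by simp
    qed
    have p: "int (Suc k choose Suc i) = int (k choose i) + int (k choose Suc i)" by simp
    have "x i = int (k choose i)^2" using Suc ik by simp
    then show ?case using e1 e2 p by (simp add: power2_eq_square algebra_simps)
  qed
  show ?thesis using main[OF assms] unfolding x_def by (metis of_nat_eq_iff of_nat_power)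
qed

end
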